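(* Given the data-dictionary $\mathcal{D}_{N_\mathrm{d}}=\{u_k,p_k,x_k\}_{k=1}^{N_\mathrm{d}}$ measured from the LPV system $x_{k+1}=A(p_k)x_k+B(p_k)u_k$ (with affine dependence $A(p)=A_0+\sum_{i=1}^{n_\mathrm{p}}p_iA_i$, $B(p)=B_0+\sum_{i=1}^{n_\mathrm{p}}p_iB_i$) and satisfying the persistency of excitation condition that $D_\mathrm{p}:=\begin{bmatrix} X^\top & (X^\mathrm{p})^\top & U^\top & (U^\mathrm{p})^\top\end{bmatrix}^\top$ has full row rank $(1+n_\mathrm{p})(n_\mathrm{x}+n_\mathrm{u})$. For an LPV controller $u_k=K(p_k)x_k$ with $K(p)=K_0+\sum_{i=1}^{n_\mathrm{p}}p_iK_i$ and $\bar{K}=\begin{bmatrix}K_1 & \cdots & K_{n_\mathrm{p}}\end{bmatrix}$, the closed-loop system $x_{k+1}=(A(p_k)+B(p_k)K(p_k))x_k$ is represented equivalently as \[ x_{k+1}=X_+\mathcal{V}\begin{bmatrix} x_k\\ p_k\otimes x_k\\ p_k\otimes p_k\otimes x_k\end{bmatrix}, \] where $\mathcal{V}\in\mathbb{R}^{(N_\mathrm{d}-1)\times n_\mathrm{x}(1+n_\mathrm{p}+n_\mathrm{p}^2)}$ is any matrix that satisfies \[ \mathcal{M}_\mathrm{CL}:=\begin{bmatrix} I_{n_\mathrm{x}} & 0 & 0\\ 0 & I_{n_\mathrm{p}}\otimes I_{n_\mathrm{x}} & 0\\ K_0 & \bar{K} & 0\\ 0 & I_{n_\mathrm{p}}\otimes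 K_0 & I_{n_\mathrm{p}}\otimes\bar{K}\end{bmatrix}=\begin{bmatrix} X\\ X^\mathrm{p}\\ U\\ U^\mathrm{p}\end{bmatrix}\mathcal{V}. \]
   Context: Discrete-time LPV system $x_{k+1}=A(p_k)x_k+B(p_k)u_k$, $y_k=x_k$, with $x_k\in\mathbb{R}^{n_\mathrm{x}}$, $u_k\in\mathbb{R}^{n_\mathrm{u}}$, $p_k\in\mathbb{P}\subset\mathbb{R}^{n_\mathrm{p}}$ ($\mathbb{P}$ compact and convex), and $A,B$ affine in $p$. From the measured data $\mathcal{D}_{N_\mathrm{d}}=\{u^\mathrm{d}_k,p^\mathrm{d}_k,x^\mathrm{d}_k\}_{k=1}^{N_\mathrm{d}}$ the data matrices are $U=\begin{bmatrix}u^\mathrm{d}_1 & \cdots & u^\mathrm{d}_{N_\mathrm{d}-1}\end{bmatrix}$, $U^\mathrm{p}=\begin{bmatrix}p^\mathrm{d}_1\otimes u^\mathrm{d}_1 & \cdots & p^\mathrm{d}_{N_\mathrm{d}-1}\otimes u^\mathrm{d}_{N_\mathrm{d}-1}\end{bmatrix}$, $X=\begin{bmatrix}x^\mathrm{d}_1 & \cdots & x^\mathrm{d}_{N_\mathrm{d}-1}\end{bmatrix}$, $X^\mathrm{p}=\begin{bmatrix}p^\mathrm{d}_1\otimes x^\mathrm{d}_1 & \cdots & p^\mathrm{d}_{N_\mathrm{d}-1}\otimes x^\mathrm{d}_{N_\mathrm{d}-1}\end{bmatrix}$, $X_+=\begin{bmatrix}x^\mathrm{d}_2 & \cdots & x^\mathrm{d}_{N_\mathrm{d}}\end{bmatrix}$;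 $\otimes$ is the Kronecker product. *)

theory Defs
  imports "Jordan_Normal_Form.DL_Rank"
begin

definition kron :: "real mat \<Rightarrow> real mat \<Rightarrow> real mat" where
  "kron A B = mat (dim_row A * dim_row B) (dim_col A * dim_col B)
     (\<lambda>(i,j). A $$ (i div dim_row B, j div dim_col B) * B $$ (i mod dim_row B, j mod dim_col B))"

definition kron_vec :: "real vec \<Rightarrow> real vec \<Rightarrow> real vec" where
  "kron_vec p x = vec (dim_vec p * dim_vec x)
     (\<lambda>i. p $ (i div dim_vec x) * x $ (i mod dim_vec x))"

definition hcat :: "real mat \<Rightarrow> real mat \<Rightarrow> real mat" where
  "hcat A B = mat (dim_row A) (dim_col A + dim_col B)
     (\<lambda>(i,j). if j < dim_col A then A $$ (i,j) else B $$ (i, j - dim_col A))"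

text \<open>Affine parameter dependence M(p) = M_0 + sum_{i=1}^{np} p_i M_i,
  where the coefficient matrices are Ms 0, Ms 1, ..., Ms np (all nr x nc),
  and p is a vector of dimension np (p_i is p $ (i-1)).\<close>
definition affine_mat :: "nat \<Rightarrow> nat \<Rightarrow> nat \<Rightarrow> (nat \<Rightarrow> real mat) \<Rightarrow> real vec \<Rightarrow> real mat" where
  "affine_mat nr nc np Ms p = mat nr nc
     (\<lambda>(i,j). Ms 0 $$ (i,j) + (\<Sum>l<np. p $ l * Ms (Suc l) $$ (i,j)))"

definition bar_mat :: "nat \<Rightarrow> nat \<Rightarrow> nat \<Rightarrow> (nat \<Rightarrow> real mat) \<Rightarrow> real mat" where
  "bar_mat nr nc np Ms = mat nr (np * nc) (\<lambda>(i,j). Ms (Suc (j div nc)) $$ (i, j mod nc))"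

text \<open>Data matrix [w_1 ... w_{Nd-1}] (columns of dimension n), data indexed from 1.\<close>
definition data_mat :: "nat \<Rightarrow> nat \<Rightarrow> (nat \<Rightarrow> real vec) \<Rightarrow> real mat" where
  "data_mat n Nd w = mat n (Nd - 1) (\<lambda>(i,j). w (Suc j) $ i)"

definition full_row_rank :: "real mat \<Rightarrow> bool" where
  "full_row_rank M \<longleftrightarrow> vec_space.rank (dim_row M) M = dim_row M"

end

theory Submission
  imports Defs
begin

lemma sum_split_mult:
  "(\<Sum>j<a*b. f j) = (\<Sum>l<a. \<Sum>m<b. f (l*b+m)) " for f :: "nat \<Rightarrow> 'a::comm_monoid_add"
proof (induction a)
  case 0 then show ?case by simp
next
  case (Suc a)
  have eq: "{..<Suc a * b} = {..<a*b} \<union> {a*b..<a*b+b}" by auto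
  have "(\<Sum>j<Suc a*b. f j) = (\<Sum>j<a*b. f j) + (\<Sum>j\<in>{a*b..<a*b+b}. f j)"
    by (simp only: eq, rule sum.union_disjoint) auto
  also have "(\<Sum>j\<in>{a*b..<a*b+b}. f j) = (\<Sum>m<b. f (a*b+m))"
    by (rule sum.reindex_bij_witness[of _ "\<lambda>m. a*b+m" "\<lambda>j. j - a*b"]) auto
  finally show ?case using Suc by simp
qed

lemma dim_kron_vec[simp]: "dim_vec (kron_vec p x) = dim_vec p * dim_vec x"
  by (simp add: kron_vec_def)

lemma kron_vec_carrier[simp,intro]:
  assumes "p \<in> carrier_vec a" "x \<in> carrier_vec b" shows "kron_vec p x \<in> carrier_vec (a*b)"
proof (rule carrier_vecI)
  have "dim_vec p = a" "dim_vec x = b" using assms by (auto dest: carrier_vecD)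
  then show "dim_vec (kron_vec p x) = a*b" by (simp only: dim_kron_vec)
qed

lemma index_kron_vec[simp]: "i < dim_vec p * dim_vec x \<Longrightarrow> kron_vec p x $ i = p $ (i div dim_vec x) * x $ (i mod dim_vec x)"
  by (simp add: kron_vec_def)

lemma kron_vec_add: assumes "p \<in> carrier_vec np" "a \<in> carrier_vec n" "b \<in> carrier_vec n"
  shows "kron_vec p a + kron_vec p b = kron_vec p (a + b)"
proof (rule eq_vecI)
  fix i assume i: "i < dim_vec (kron_vec p (a + b))"
  then have "n > 0" using assms by (auto intro: Nat.gr0I)
  then have "i mod n < n" by simp
  then show "(kron_vec p a + kron_vec p b) $ i = kron_vec p (a + b) $ i"
    using assms i by (auto simp: algebra_simps)
qed (use assms in auto)

lemma hcat_carrier[simp,intro]: "A \<in> carrier_mat nr n1 \<Longrightarrow> B \<in> carrier_mat nr' n2 \<Longrightarrow> hcat A B \<in> carrier_mat nr (n1+n2)"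
  by (intro carrier_matI) (auto simp: hcat_def)

lemma kron_carrier[simp,intro]: "A \<in> carrier_mat a b \<Longrightarrow> B \<in> carrier_mat c d \<Longrightarrow> kron A B \<in> carrier_mat (a*c) (b*d)"
  by (intro carrier_matI) (auto simp: kron_def)

lemma bar_carrier[simp,intro]: "bar_mat nr nc np Ms \<in> carrier_mat nr (np*nc)"
  by (simp add: bar_mat_def)

lemma affine_carrier[simp,intro]: "affine_mat nr nc np Ms p \<in> carrier_mat nr nc"
  by (simp add: affine_mat_def)

lemma data_carrier[simp,intro]: "data_mat n Nd w \<in> carrier_mat n (Nd - 1)"
  by (simp add: data_mat_def)

lemma col_data_mat: "j < Nd - 1 \<Longrightarrow> w (Suc j) \<in> carrier_vec n \<Longrightarrow> col (data_mat n Nd w) j = w (Suc j)"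
  by (intro eq_vecI) (auto simp: data_mat_def)

lemma hcat_mult:
  assumes A: "A \<in> carrier_mat nr n1" and B: "B \<in> carrier_mat nr n2"
    and a: "a \<in> carrier_vec n1" and b: "b \<in> carrier_vec n2"
  shows "hcat A B *\<^sub>v (a @\<^sub>v b) = A *\<^sub>v a + B *\<^sub>v b"
proof (rule eq_vecI)
  fix i assume "i < dim_vec (A *\<^sub>v a + B *\<^sub>v b)"
  then have i: "i < nr" using A B by simp
  have rw: "row (hcat A B) i = row A i @\<^sub>v row B i"
    using A B i by (intro eq_vecI) (auto simp: hcat_def)
  have d: "dim_row (hcat A B) = nr" using A by (simp add: hcat_def)
  have "(hcat A B *\<^sub>v (a @\<^sub>v b)) $ i = row (hcat A B) i \<bullet> (a @\<^sub>v b)" using d i by simp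
  also have "\<dots> = (row A i @\<^sub>v row B i) \<bullet> (a @\<^sub>v b)" by (simp only: rw)
  also have "\<dots> = row A i \<bullet> a + row B i \<bullet> b" by (rule scalar_prod_append) (use A B a b in auto)
  also have "\<dots> = (A *\<^sub>v a + B *\<^sub>v b) $ i" using A B i by simp
  finally show "(hcat A B *\<^sub>v (a @\<^sub>v b)) $ i = (A *\<^sub>v a + B *\<^sub>v b) $ i" .
qed (use A B in \<open>simp add: hcat_def\<close>)

lemma col_append_rows:
  assumes A: "A \<in> carrier_mat nr1 nc" and B: "B \<in> carrier_mat nr2 nc" and j: "j < nc"
  shows "col (A @\<^sub>r B) j = col A j @\<^sub>v col B j"
  unfolding append_rows_def using A B j by (subst col_four_block_mat(1)[of _ nr1 nc _ 0 _ nr2]) auto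

lemma kron_id_id: "kron (1\<^sub>m np) (1\<^sub>m nx) = 1\<^sub>m (np*nx)"
proof (rule eq_matI)
  fix i j assume i: "i < dim_row (1\<^sub>m (np*nx) :: real mat)" and j: "j < dim_col (1\<^sub>m (np*nx) :: real mat)"
  then have "i div nx < np" "j div nx < np" "nx > 0"
    by (auto simp: less_mult_imp_div_less  mult.commute intro: Nat.gr0I)
  moreover have "(i div nx = j div nx \<and> i mod nx = j mod nx) = (i = j)"
    by (metis div_mult_mod_eq)
  ultimately show "kron (1\<^sub>m np) (1\<^sub>m nx) $$ (i, j) = 1\<^sub>m (np*nx) $$ (i, j)"
    using i j by (auto simp: kron_def)
qed (auto simp: kron_def)


lemma divmod_block[simp]: "m < (nc::nat) \<Longrightarrow> (l*nc+m) div nc = l" "m < (nc::nat) \<Longrightarrow> (l*nc+m) mod nc = m"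
  by auto

lemma kron_id_mult:
  assumes B: "B \<in> carrier_mat nr nc" and v: "v \<in> carrier_vec nc" and p: "p \<in> carrier_vec np"
  shows "kron (1\<^sub>m np) B *\<^sub>v kron_vec p v = kron_vec p (B *\<^sub>v v)"
proof (rule eq_vecI)
  fix i assume "i < dim_vec (kron_vec p (B *\<^sub>v v))"
  then have i: "i < np * nr" using B p by simp
  then have nr: "nr > 0" by (auto intro: Nat.gr0I)
  define l where "l = i div nr"
  define r where "r = i mod nr"
  have l: "l < np" using i by (simp add: l_def less_mult_imp_div_less)
  have r: "r < nr" using nr by (simp add: r_def)
  have "(kron (1\<^sub>m np) B *\<^sub>v kron_vec p v) $ i
      = (\<Sum>j<np*nc. (1\<^sub>m np $$ (l, j div nc) * B $$ (r, j mod nc)) * (p $ (j div nc) * v $ (j mod nc)))"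
    using B v p i by (simp add: kron_def scalar_prod_def l_def r_def atLeast0LessThan mult.commute)
  also have "\<dots> = (\<Sum>l'<np. \<Sum>m<nc. (1\<^sub>m np $$ (l, l') * B $$ (r, m)) * (p $ l' * v $ m))"
    unfolding sum_split_mult by (intro sum.cong refl) auto
  also have "\<dots> = (\<Sum>l'<np. if l' = l then (\<Sum>m<nc. B $$ (r, m) * (p $ l * v $ m)) else 0)"
    using l by (intro sum.cong) auto
  also have "\<dots> = (\<Sum>m<nc. B $$ (r, m) * (p $ l * v $ m))"
    using l by simp
  also have "\<dots> = kron_vec p (B *\<^sub>v v) $ i"
    using B v p i r by (simp add: l_def[symmetric] r_def[symmetric] scalar_prod_def atLeast0LessThan sum_distrib_left algebra_simps)
  finally show "(kron (1\<^sub>m np) B *\<^sub>v kron_vec p v) $ i = kron_vec p (B *\<^sub>v v) $ i" .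
qed (use B p in \<open>simp add: kron_def\<close>)

lemma affine_split:
  assumes M0: "Ms 0 \<in> carrier_mat nr nc" and Ml: "\<forall>l<np. Ms (Suc l) \<in> carrier_mat nr nc"
    and v: "v \<in> carrier_vec nc" and p: "p \<in> carrier_vec np"
  shows "affine_mat nr nc np Ms p *\<^sub>v v = Ms 0 *\<^sub>v v + bar_mat nr nc np Ms *\<^sub>v kron_vec p v"
proof (rule eq_vecI)
  fix i assume "i < dim_vec (Ms 0 *\<^sub>v v + bar_mat nr nc np Ms *\<^sub>v kron_vec p v)"
  then have i: "i < nr" by (simp add: bar_mat_def)
  have "(affine_mat nr nc np Ms p *\<^sub>v v) $ i
      = (\<Sum>j<nc. (Ms 0 $$ (i,j) + (\<Sum>l<np. p $ l * Ms (Suc l) $$ (i,j))) * v $ j)"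
    using i v by (simp add: affine_mat_def scalar_prod_def atLeast0LessThan)
  also have "\<dots> = (\<Sum>j<nc. Ms 0 $$ (i,j) * v $ j) + (\<Sum>l<np. \<Sum>j<nc. Ms (Suc l) $$ (i,j) * (p $ l * v $ j))"
  proof -
    have "(\<Sum>j<nc. (\<Sum>l<np. p $ l * Ms (Suc l) $$ (i,j)) * v $ j) = (\<Sum>j<nc. \<Sum>l<np. Ms (Suc l) $$ (i,j) * (p $ l * v $ j))"
      by (simp add: sum_distrib_left sum_distrib_right mult_ac)
    also have "\<dots> = (\<Sum>l<np. \<Sum>j<nc. Ms (Suc l) $$ (i,j) * (p $ l * v $ j))"
      by (rule sum.swap)
    finally show ?thesis by (simp add: algebra_simps sum.distrib)
  qed
  also have "(\<Sum>l<np. \<Sum>j<nc. Ms (Suc l) $$ (i,j) * (p $ l * v $ j))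
      = (\<Sum>j<np*nc. Ms (Suc (j div nc)) $$ (i, j mod nc) * (p $ (j div nc) * v $ (j mod nc)))"
    unfolding sum_split_mult by (intro sum.cong refl) auto
  also have "\<dots> = (bar_mat nr nc np Ms *\<^sub>v kron_vec p v) $ i"
    using i v p by (simp add: bar_mat_def scalar_prod_def atLeast0LessThan mult.commute)
  also have "(\<Sum>j<nc. Ms 0 $$ (i,j) * v $ j) = (Ms 0 *\<^sub>v v) $ i"
    using i v M0 by (simp add: scalar_prod_def atLeast0LessThan)
  finally show "(affine_mat nr nc np Ms p *\<^sub>v v) $ i = (Ms 0 *\<^sub>v v + bar_mat nr nc np Ms *\<^sub>v kron_vec p v) $ i"
    using i M0 by (simp add: bar_mat_def)
qed (use M0 in \<open>simp add: affine_mat_def bar_mat_def\<close>)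

lemma zero_mat_mult_vec: "v \<in> carrier_vec m \<Longrightarrow> (0\<^sub>m n m :: real mat) *\<^sub>v v = 0\<^sub>v n"
  by (intro eq_vecI) auto

theorem theorem1:
  fixes nx nu np Nd :: nat
    and As Bs Ks :: "nat \<Rightarrow> real mat"
    and P :: "real vec set"
    and ud pd xd :: "nat \<Rightarrow> real vec"
    and V :: "real mat"
  assumes As_dim: "\<forall>i\<le>np. As i \<in> carrier_mat nx nx"
    and Bs_dim: "\<forall>i\<le>np. Bs i \<in> carrier_mat nx nu"
    and Ks_dim: "\<forall>i\<le>np. Ks i \<in> carrier_mat nu nx"
    and P_dim: "P \<subseteq> carrier_vec np"
    and data_dim: "\<forall>k\<in>{1..Nd}. ud k \<in> carrier_vec nu \<and> pd k \<in> P \<and> xd k \<in> carrier_vec nx"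
    and data_sys: "\<forall>k\<in>{1..<Nd}. xd (Suc k) =
        affine_mat nx nx np As (pd k) *\<^sub>v xd k + affine_mat nx nu np Bs (pd k) *\<^sub>v ud k"
    and PE: "full_row_rank
        (data_mat nx Nd xd @\<^sub>r data_mat (np * nx) Nd (\<lambda>k. kron_vec (pd k) (xd k))
         @\<^sub>r data_mat nu Nd ud @\<^sub>r data_mat (np * nu) Nd (\<lambda>k. kron_vec (pd k) (ud k)))"
    and PE_rank: "dim_row (data_mat nx Nd xd @\<^sub>r data_mat (np * nx) Nd (\<lambda>k. kron_vec (pd k) (xd k))
         @\<^sub>r data_mat nu Nd ud @\<^sub>r data_mat (np * nu) Nd (\<lambda>k. kron_vec (pd k) (ud k)))
        = (1 + np) * (nx + nu)"
    and V_dim: "V \<in> carrier_mat (Nd - 1) (nx * (1 + np + np ^ 2))"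
    and V_eq: "hcat (1\<^sub>m nx) (0\<^sub>m nx (np * nx + np * np * nx))
        @\<^sub>r hcat (0\<^sub>m (np * nx) nx) (hcat (kron (1\<^sub>m np) (1\<^sub>m nx)) (0\<^sub>m (np * nx) (np * np * nx)))
        @\<^sub>r hcat (Ks 0) (hcat (bar_mat nu nx np Ks) (0\<^sub>m nu (np * np * nx)))
        @\<^sub>r hcat (0\<^sub>m (np * nu) nx) (hcat (kron (1\<^sub>m np) (Ks 0)) (kron (1\<^sub>m np) (bar_mat nu nx np Ks)))
      = (data_mat nx Nd xd @\<^sub>r data_mat (np * nx) Nd (\<lambda>k. kron_vec (pd k) (xd k))
         @\<^sub>r data_mat nu Nd ud @\<^sub>r data_mat (np * nu) Nd (\<lambda>k. kron_vec (pd k) (ud k))) * V"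
  shows "\<forall>p\<in>P. \<forall>x\<in>carrier_vec nx.
    (affine_mat nx nx np As p + affine_mat nx nu np Bs p * affine_mat nu nx np Ks p) *\<^sub>v x
    = (data_mat nx Nd (\<lambda>k. xd (Suc k)) * V) *\<^sub>v (x @\<^sub>v kron_vec p x @\<^sub>v kron_vec p (kron_vec p x))"
proof (intro ballI)
  fix p x :: "real vec" assume pP: "p \<in> P" and x: "x \<in> carrier_vec nx"
  have p: "p \<in> carrier_vec np" using pP P_dim by auto
  have A0: "As 0 \<in> carrier_mat nx nx" and Al: "\<forall>l<np. As (Suc l) \<in> carrier_mat nx nx"
    using As_dim by auto
  have B0: "Bs 0 \<in> carrier_mat nx nu" and Bl: "\<forall>l<np. Bs (Suc l) \<in> carrier_mat nx nu"
    using Bs_dim by auto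
  have K0: "Ks 0 \<in> carrier_mat nu nx" and Kl: "\<forall>l<np. Ks (Suc l) \<in> carrier_mat nu nx"
    using Ks_dim by auto
  have c3: "hcat (Bs 0) (bar_mat nx nu np Bs) \<in> carrier_mat nx (nu + np*nu)"
    by (rule hcat_carrier[OF B0 bar_carrier])
  have c2: "hcat (bar_mat nx nx np As) (hcat (Bs 0) (bar_mat nx nu np Bs)) \<in> carrier_mat nx (np*nx + (nu + np*nu))"
    by (rule hcat_carrier[OF bar_carrier c3])
  define Th where "Th = hcat (As 0) (hcat (bar_mat nx nx np As) (hcat (Bs 0) (bar_mat nx nu np Bs)))"
  have Th_c: "Th \<in> carrier_mat nx (nx + (np*nx + (nu + np*nu)))"
    unfolding Th_def by (rule hcat_carrier[OF A0 c2])
  have Th_mult: "Th *\<^sub>v (a @\<^sub>v kron_vec q a @\<^sub>v c @\<^sub>v kron_vec q c)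
      = affine_mat nx nx np As q *\<^sub>v a + affine_mat nx nu np Bs q *\<^sub>v c"
    if a: "a \<in> carrier_vec nx" and c: "c \<in> carrier_vec nu" and q: "q \<in> carrier_vec np" for a c q
  proof -
    have ka: "kron_vec q a \<in> carrier_vec (np*nx)" using q a by (rule kron_vec_carrier)
    have kc: "kron_vec q c \<in> carrier_vec (np*nu)" using q c by (rule kron_vec_carrier)
    have v3: "c @\<^sub>v kron_vec q c \<in> carrier_vec (nu + np*nu)" using c kc by (rule append_carrier_vec)
    have v2: "kron_vec q a @\<^sub>v c @\<^sub>v kron_vec q c \<in> carrier_vec (np*nx + (nu + np*nu))"
      using ka v3 by (rule append_carrier_vec)
    have "Th *\<^sub>v (a @\<^sub>v kron_vec q a @\<^sub>v c @\<^sub>v kron_vec q c)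
       = As 0 *\<^sub>v a + (bar_mat nx nx np As *\<^sub>v kron_vec q a + (Bs 0 *\<^sub>v c + bar_mat nx nu np Bs *\<^sub>v kron_vec q c))"
      unfolding Th_def hcat_mult[OF A0 c2 a v2] hcat_mult[OF bar_carrier c3 ka v3] hcat_mult[OF B0 bar_carrier c kc]
      by (rule refl)
    also have "\<dots> = (As 0 *\<^sub>v a + bar_mat nx nx np As *\<^sub>v kron_vec q a) + (Bs 0 *\<^sub>v c + bar_mat nx nu np Bs *\<^sub>v kron_vec q c)"
      by (rule assoc_add_vec[symmetric, of _ nx]) (use mult_mat_vec_carrier[OF A0 a] mult_mat_vec_carrier[OF B0 c]
         mult_mat_vec_carrier[OF bar_carrier ka] mult_mat_vec_carrier[OF bar_carrier kc] in auto)
    also have "\<dots> = affine_mat nx nx np As q *\<^sub>v a + affine_mat nx nu np Bs q *\<^sub>v c"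
      unfolding affine_split[OF A0 Al a q] affine_split[OF B0 Bl c q] ..
    finally show ?thesis .
  qed
  define D where "D = data_mat nx Nd xd @\<^sub>r data_mat (np * nx) Nd (\<lambda>k. kron_vec (pd k) (xd k))
         @\<^sub>r data_mat nu Nd ud @\<^sub>r data_mat (np * nu) Nd (\<lambda>k. kron_vec (pd k) (ud k))"
  have D_c: "D \<in> carrier_mat (nx + (np*nx + (nu + np*nu))) (Nd - 1)"
    unfolding D_def by (intro carrier_append_rows data_carrier)
  have XD: "data_mat nx Nd (\<lambda>k. xd (Suc k)) = Th * D"
  proof (rule mat_col_eqI)
    fix j assume "j < dim_col (Th * D)"
    then have j: "j < Nd - 1" using D_c by simp
    then have k1: "Suc j \<in> {1..Nd}" "Suc j \<in> {1..<Nd}" "Suc (Suc j) \<in> {1..Nd}" by auto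
    have xk: "xd (Suc j) \<in> carrier_vec nx" and uk: "ud (Suc j) \<in> carrier_vec nu"
      and pk: "pd (Suc j) \<in> carrier_vec np" and xk2: "xd (Suc (Suc j)) \<in> carrier_vec nx"
      using data_dim k1 P_dim by auto
    have "col D j = xd (Suc j) @\<^sub>v kron_vec (pd (Suc j)) (xd (Suc j)) @\<^sub>v ud (Suc j) @\<^sub>v kron_vec (pd (Suc j)) (ud (Suc j))"
      unfolding D_def
      by (simp only: col_append_rows[OF data_carrier carrier_append_rows[OF data_carrier carrier_append_rows[OF data_carrier data_carrier]] j]
        col_append_rows[OF data_carrier carrier_append_rows[OF data_carrier data_carrier] j]
        col_append_rows[OF data_carrier data_carrier j]
        col_data_mat[where w=xd, OF j xk] col_data_mat[where w=ud, OF j uk] col_data_mat[where w="\<lambda>k. kron_vec (pd k) (xd k)", OF j kron_vec_carrier[OF pk xk]]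
        col_data_mat[where w="\<lambda>k. kron_vec (pd k) (ud k)", OF j kron_vec_carrier[OF pk uk]])
    then have "col (Th * D) j = affine_mat nx nx np As (pd (Suc j)) *\<^sub>v xd (Suc j) + affine_mat nx nu np Bs (pd (Suc j)) *\<^sub>v ud (Suc j)"
      using col_mult2[OF Th_c D_c j] Th_mult[OF xk uk pk] by simp
    also have "\<dots> = xd (Suc (Suc j))" using bspec[OF data_sys k1(2)] by (rule sym)
    also have "\<dots> = col (data_mat nx Nd (\<lambda>k. xd (Suc k))) j" using col_data_mat[OF j, of "\<lambda>k. xd (Suc k)"] xk2 by simp
    finally show "col (data_mat nx Nd (\<lambda>k. xd (Suc k))) j = col (Th * D) j" by simp
  qed (use Th_c D_c in \<open>auto simp: data_mat_def\<close>)
  define kx where "kx = kron_vec p x"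
  define kkx where "kkx = kron_vec p kx"
  have kx: "kx \<in> carrier_vec (np*nx)" unfolding kx_def using p x by (rule kron_vec_carrier)
  have kkx0: "kkx \<in> carrier_vec (np*(np*nx))" unfolding kkx_def using p kx by (rule kron_vec_carrier)
  have kkx: "kkx \<in> carrier_vec (np*np*nx)" using kkx0 by (simp add: mult.assoc)
  define y where "y = affine_mat nu nx np Ks p *\<^sub>v x"
  have y: "y \<in> carrier_vec nu" unfolding y_def using affine_carrier x by (rule mult_mat_vec_carrier)
  have ysplit: "y = Ks 0 *\<^sub>v x + bar_mat nu nx np Ks *\<^sub>v kx"
    unfolding y_def kx_def using affine_split[OF K0 Kl x p] .
  have v23: "kx @\<^sub>v kkx \<in> carrier_vec (np * nx + np * np * nx)" using kx kkx by (rule append_carrier_vec)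
  have z: "x @\<^sub>v kx @\<^sub>v kkx \<in> carrier_vec (nx + (np * nx + np * np * nx))" using x v23 by (rule append_carrier_vec)
  have kid: "kron (1\<^sub>m np) (1\<^sub>m nx) \<in> carrier_mat (np*nx) (np*nx)" using kron_id_id[of np nx] by simp
  have kb0: "kron (1\<^sub>m np) (bar_mat nu nx np Ks) \<in> carrier_mat (np*nu) (np * (np * nx))"
    by (rule kron_carrier[OF one_carrier_mat bar_carrier])
  have kb: "kron (1\<^sub>m np) (bar_mat nu nx np Ks) \<in> carrier_mat (np*nu) (np * np * nx)"
    using kb0 by (simp add: mult.assoc)
  have kK: "kron (1\<^sub>m np) (Ks 0) \<in> carrier_mat (np*nu) (np*nx)" by (rule kron_carrier[OF one_carrier_mat K0])
  define R1 where "R1 = hcat (1\<^sub>m nx) (0\<^sub>m nx (np * nx + np * np * nx))"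
  define R2 where "R2 = hcat (0\<^sub>m (np * nx) nx) (hcat (kron (1\<^sub>m np) (1\<^sub>m nx)) (0\<^sub>m (np * nx) (np * np * nx)))"
  define R3 where "R3 = hcat (Ks 0) (hcat (bar_mat nu nx np Ks) (0\<^sub>m nu (np * np * nx)))"
  define R4 where "R4 = hcat (0\<^sub>m (np * nu) nx) (hcat (kron (1\<^sub>m np) (Ks 0)) (kron (1\<^sub>m np) (bar_mat nu nx np Ks)))"
  have R2i: "hcat (kron (1\<^sub>m np) (1\<^sub>m nx)) (0\<^sub>m (np * nx) (np * np * nx)) \<in> carrier_mat (np*nx) (np * nx + np * np * nx)"
    by (rule hcat_carrier[OF kid zero_carrier_mat])
  have R3i: "hcat (bar_mat nu nx np Ks) (0\<^sub>m nu (np * np * nx)) \<in> carrier_mat nu (np * nx + np * np * nx)"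
    by (rule hcat_carrier[OF bar_carrier zero_carrier_mat])
  have R4i: "hcat (kron (1\<^sub>m np) (Ks 0)) (kron (1\<^sub>m np) (bar_mat nu nx np Ks)) \<in> carrier_mat (np*nu) (np * nx + np * np * nx)"
    by (rule hcat_carrier[OF kK kb])
  have R1c: "R1 \<in> carrier_mat nx (nx + (np * nx + np * np * nx))" unfolding R1_def by (rule hcat_carrier[OF one_carrier_mat zero_carrier_mat])
  have R2c: "R2 \<in> carrier_mat (np*nx) (nx + (np * nx + np * np * nx))" unfolding R2_def by (rule hcat_carrier[OF zero_carrier_mat R2i])
  have R3c: "R3 \<in> carrier_mat nu (nx + (np * nx + np * np * nx))" unfolding R3_def by (rule hcat_carrier[OF K0 R3i])
  have R4c: "R4 \<in> carrier_mat (np*nu) (nx + (np * nx + np * np * nx))" unfolding R4_def by (rule hcat_carrier[OF zero_carrier_mat R4i])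
  have r1: "R1 *\<^sub>v (x @\<^sub>v kx @\<^sub>v kkx) = x"
    unfolding R1_def hcat_mult[OF one_carrier_mat zero_carrier_mat x v23]
    using x v23 by (simp add: zero_mat_mult_vec)
  have r2: "R2 *\<^sub>v (x @\<^sub>v kx @\<^sub>v kkx) = kx"
    unfolding R2_def hcat_mult[OF zero_carrier_mat R2i x v23] hcat_mult[OF kid zero_carrier_mat kx kkx]
    using x kx kkx by (simp add: zero_mat_mult_vec kron_id_id)
  have r3: "R3 *\<^sub>v (x @\<^sub>v kx @\<^sub>v kkx) = y"
    unfolding R3_def hcat_mult[OF K0 R3i x v23] hcat_mult[OF bar_carrier zero_carrier_mat kx kkx] ysplit
    using x kx kkx K0 mult_mat_vec_carrier[OF bar_carrier kx] by (simp add: zero_mat_mult_vec)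
  have r4: "R4 *\<^sub>v (x @\<^sub>v kx @\<^sub>v kkx) = kron_vec p y"
  proof -
    have "R4 *\<^sub>v (x @\<^sub>v kx @\<^sub>v kkx)
      = 0\<^sub>m (np * nu) nx *\<^sub>v x + (kron (1\<^sub>m np) (Ks 0) *\<^sub>v kx + kron (1\<^sub>m np) (bar_mat nu nx np Ks) *\<^sub>v kkx)"
      unfolding R4_def hcat_mult[OF zero_carrier_mat R4i x v23] hcat_mult[OF kK kb kx kkx] ..
    also have "\<dots> = kron_vec p (Ks 0 *\<^sub>v x) + kron_vec p (bar_mat nu nx np Ks *\<^sub>v kx)"
      unfolding kkx_def kx_def kron_id_mult[OF K0 x p] kron_id_mult[OF bar_carrier kx[unfolded kx_def] p]
      by (simp only: zero_mat_mult_vec[OF x], rule left_zero_vec,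
          intro add_carrier_vec kron_vec_carrier[OF p] mult_mat_vec_carrier[OF K0 x]
            mult_mat_vec_carrier[OF bar_carrier kx[unfolded kx_def]])
    also have "\<dots> = kron_vec p y" unfolding ysplit
      by (rule kron_vec_add[OF p mult_mat_vec_carrier[OF K0 x] mult_mat_vec_carrier[OF bar_carrier kx]])
    finally show ?thesis .
  qed
  define M where "M = R1 @\<^sub>r R2 @\<^sub>r R3 @\<^sub>r R4"
  have M_c: "M \<in> carrier_mat (nx + (np*nx + (nu + np*nu))) (nx + (np*nx + np*np*nx))"
    unfolding M_def using R1c R2c R3c R4c by (intro carrier_append_rows)
  have Mz: "M *\<^sub>v (x @\<^sub>v kx @\<^sub>v kkx) = x @\<^sub>v kx @\<^sub>v y @\<^sub>v kron_vec p y"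
    unfolding M_def mat_mult_append[OF R1c carrier_append_rows[OF R2c carrier_append_rows[OF R3c R4c]] z]
      mat_mult_append[OF R2c carrier_append_rows[OF R3c R4c] z] mat_mult_append[OF R3c R4c z] r1 r2 r3 r4 ..
  have V_eq': "M = D * V" unfolding M_def D_def R1_def R2_def R3_def R4_def by (rule V_eq)
  have V_c: "V \<in> carrier_mat (Nd - 1) (nx + (np*nx + np*np*nx))" using V_dim
    by (simp add: algebra_simps power2_eq_square)
  have e1: "data_mat nx Nd (\<lambda>k. xd (Suc k)) * V = Th * M"
    unfolding XD V_eq' by (rule assoc_mult_mat[OF Th_c D_c V_c])
  have e2: "(Th * M) *\<^sub>v (x @\<^sub>v kx @\<^sub>v kkx) = Th *\<^sub>v (M *\<^sub>v (x @\<^sub>v kx @\<^sub>v kkx))"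
    by (rule assoc_mult_mat_vec[OF Th_c M_c z])
  have e3: "Th *\<^sub>v (M *\<^sub>v (x @\<^sub>v kx @\<^sub>v kkx)) = affine_mat nx nx np As p *\<^sub>v x + affine_mat nx nu np Bs p *\<^sub>v y"
    unfolding Mz unfolding kx_def by (rule Th_mult[OF x y p])
  have e4: "affine_mat nx nx np As p *\<^sub>v x + affine_mat nx nu np Bs p *\<^sub>v y
     = (affine_mat nx nx np As p + affine_mat nx nu np Bs p * affine_mat nu nx np Ks p) *\<^sub>v x"
    unfolding y_def
    by (simp only: add_mult_distrib_mat_vec[OF affine_carrier mult_carrier_mat[OF affine_carrier affine_carrier] x]
        assoc_mult_mat_vec[OF affine_carrier affine_carrier x])
  have zz: "x @\<^sub>v kron_vec p x @\<^sub>v kron_vec p (kron_vec p x) = x @\<^sub>v kx @\<^sub>v kkx"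
    unfolding kx_def kkx_def by (rule refl)
  show "(affine_mat nx nx np As p + affine_mat nx nu np Bs p * affine_mat nu nx np Ks p) *\<^sub>v x
    = (data_mat nx Nd (\<lambda>k. xd (Suc k)) * V) *\<^sub>v (x @\<^sub>v kron_vec p x @\<^sub>v kron_vec p (kron_vec p x))"
    unfolding e1 zz e2 e3 e4 by (rule refl)
qed

end
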